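(* Let $G$ be a loopless multigraph with $n$ vertices, $m$ edges and maximum degree $\Delta$, and let $q\in\mathbb{N}$ and $\lambda\ge1$. Then $$Z(G,\lambda,q)\le\left(1+q^{-1}(\lambda^\Delta-1)\right)^{\lceil m/\Delta\rceil}q^n.$$ Moreover, if $\Delta$ divides $m$ and $2m/\Delta\le n$, equality holds for $G=H(n,m,\Delta)$.
   Context: For a loopless multigraph $G=(V,E)$ (multiple edges allowed), $Z(G,\lambda,q)=\sum_{\sigma\in[q]^V}\lambda^{\mu(\sigma)}$, where $\mu(\sigma)$ is the number of edges (counted with multiplicity) whose two endpoints receive the same colour under $\sigma$. For positive integers $n,m,\Delta$ with $\Delta\mid m$ and $m\le\Delta n/2$, $H(n,m,\Delta)$ is the multigraph on $n$ vertices obtained by taking $m/\Delta$ pairwise disjoint (independent) edges and replacing each by $\Delta$ parallel edges. *)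

theory Defs
  imports Complex_Main "HOL-Library.Multiset" "HOL-Library.FuncSet"
begin

text \<open>A loopless multigraph is given by a vertex set V and a multiset E of edges,
each edge an (unordered, orientation irrelevant) pair (u,v) with u \<noteq> v in V.\<close>

definition loopless_multigraph :: "'a set \<Rightarrow> ('a \<times> 'a) multiset \<Rightarrow> bool" where
  "loopless_multigraph V E \<longleftrightarrow> finite V \<and> (\<forall>e \<in># E. fst e \<in> V \<and> snd e \<in> V \<and> fst e \<noteq> snd e)"

definition mg_degree :: "('a \<times> 'a) multiset \<Rightarrow> 'a \<Rightarrow> nat" where
  "mg_degree E x = size (filter_mset (\<lambda>e. fst e = x \<or> snd e = x) E)"

definition max_degree :: "'a set \<Rightarrow> ('a \<times> 'a) multiset \<Rightarrow> nat" where
  "max_degree V E = Max (insert 0 (mg_degree E ` V))"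

definition mono_edges :: "('a \<times> 'a) multiset \<Rightarrow> ('a \<Rightarrow> nat) \<Rightarrow> nat" where
  "mono_edges E \<sigma> = size (filter_mset (\<lambda>e. \<sigma> (fst e) = \<sigma> (snd e)) E)"

definition Z :: "'a set \<Rightarrow> ('a \<times> 'a) multiset \<Rightarrow> real \<Rightarrow> nat \<Rightarrow> real" where
  "Z V E lam q = (\<Sum>\<sigma> \<in> (V \<rightarrow>\<^sub>E {..<q}). lam ^ mono_edges E \<sigma>)"

definition H_vertices :: "nat \<Rightarrow> nat set" where
  "H_vertices n = {..<n}"

definition H_edges :: "nat \<Rightarrow> nat \<Rightarrow> (nat \<times> nat) multiset" where
  "H_edges m \<Delta> = mset (concat (map (\<lambda>i. replicate \<Delta> (2*i, 2*i+1)) [0..<m div \<Delta>]))"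

end

theory Submission imports Defs "HOL-Analysis.Analysis" begin

lemma inj_upd: "x \<notin> S \<Longrightarrow> inj_on (\<lambda>(y, g). g(x := y)) (T \<times> Pi\<^sub>E S B)"
proof (rule inj_onI, clarsimp)
  fix a f b g assume xs: "x \<notin> S" and f: "f \<in> Pi\<^sub>E S B" and g: "g \<in> Pi\<^sub>E S B"
    and e: "f(x := a) = g(x := b)"
  have "a = b" using fun_upd_eqD[OF e] by simp
  moreover have "f = g"
  proof
    fix z show "f z = g z"
    proof (cases "z = x")
      case True then show ?thesis using xs f g by (auto simp: PiE_def extensional_def)
    next
      case False then show ?thesis using e by (metis fun_upd_other)
    qed
  qed
  ultimately show "a = b \<and> f = g" by simp
qed

lemma sum_PiE_ins:
  assumes "x \<notin> S"
  shows "(\<Sum>\<sigma>\<in>Pi\<^sub>E (insert x S) (\<lambda>_. A). h \<sigma>) = (\<Sum>\<tau>\<in>Pi\<^sub>E S (\<lambda>_. A). \<Sum>c\<in>A. h (\<tau>(x := c)))"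
proof -
  have "(\<Sum>\<sigma>\<in>Pi\<^sub>E (insert x S) (\<lambda>_. A). h \<sigma>) = (\<Sum>p\<in>A \<times> Pi\<^sub>E S (\<lambda>_. A). h ((\<lambda>(y, g). g(x := y)) p))"
    unfolding PiE_insert_eq by (rule sum.reindex[OF inj_upd[OF assms], unfolded comp_def])
  also have "\<dots> = (\<Sum>c\<in>A. \<Sum>\<tau>\<in>Pi\<^sub>E S (\<lambda>_. A). h (\<tau>(x := c)))"
    by (simp add: sum.cartesian_product case_prod_unfold)
  also have "\<dots> = (\<Sum>\<tau>\<in>Pi\<^sub>E S (\<lambda>_. A). \<Sum>c\<in>A. h (\<tau>(x := c)))"
    by (rule sum.swap)
  finally show ?thesis .
qed

lemma Z_ins: "x \<notin> S \<Longrightarrow> Z (insert x S) E lam q = (\<Sum>\<tau>\<in>S \<rightarrow>\<^sub>E {..<q}. \<Sum>c<q. lam ^ mono_edges E (\<tau>(x := c)))"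
  unfolding Z_def by (rule sum_PiE_ins)

lemma Z_empty: "Z {} {#} lam q = 1"
  by (simp add: Z_def mono_edges_def)

lemma mono_plus: "mono_edges (A + B) \<sigma> = mono_edges A \<sigma> + mono_edges B \<sigma>"
  by (simp add: mono_edges_def)

lemma mono_untouched: "\<forall>e\<in>#E. fst e \<noteq> x \<and> snd e \<noteq> x \<Longrightarrow> mono_edges E (\<tau>(x := c)) = mono_edges E \<tau>"
  unfolding mono_edges_def by (intro arg_cong[where f=size] filter_mset_cong) auto

lemma Z_isolated:
  assumes "x \<notin> S" "\<forall>e\<in>#E. fst e \<noteq> x \<and> snd e \<noteq> x"
  shows "Z (insert x S) E lam q = q * Z S E lam q"
  using assms by (simp add: Z_ins mono_untouched) (simp add: Z_def sum_distrib_left)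

lemma mono_rep: "mono_edges (replicate_mset D (a,b)) \<sigma> = (if \<sigma> a = \<sigma> b then D else 0)"
  unfolding mono_edges_def by (induction D) auto

lemma concave_step:
  fixes a x t :: real
  assumes "0 < a" "a \<le> 1" "x \<ge> 1" "0 \<le> t" "t \<le> 1"
  shows "1 - a + a * x powr t \<le> (1 - a + a * x) powr t"
proof -
  define Y where "Y = 1 - a + a * x"
  have Y1: "Y \<ge> 1" using assms unfolding Y_def by (smt (verit) mult_left_mono mult_cancel_left1)
  have Yp: "Y powr t > 0" using Y1 by simp
  have h1: "(1/Y) powr t \<le> t * (1/Y) + (1 - t)"
    using Youngs_inequality_0[of t "1 - t" "1/Y" 1] assms Y1 by simp
  have h2: "(x/Y) powr t \<le> t * (x/Y) + (1 - t)"
    using Youngs_inequality_0[of t "1 - t" "x/Y" 1] assms Y1 by simp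
  have "(1 - a) * (1/Y) powr t + a * (x/Y) powr t \<le> (1 - a) * (t * (1/Y) + (1 - t)) + a * (t * (x/Y) + (1 - t))"
    using h1 h2 assms by (intro add_mono mult_left_mono) auto
  also have "\<dots> = t * ((1 - a + a * x) / Y) + (1 - t)" using Y1 by (simp add: field_simps)
  also have "\<dots> = 1" using Y1 unfolding Y_def by simp
  finally have "(1 - a) * (1/Y) powr t + a * (x/Y) powr t \<le> 1" .
  moreover have "(1/Y) powr t = 1 / Y powr t" "(x/Y) powr t = x powr t / Y powr t"
    using Y1 assms by (simp_all add: powr_divide)
  ultimately have "((1 - a) + a * x powr t) / Y powr t \<le> 1" by (simp add: add_divide_distrib)
  then show ?thesis using Yp unfolding Y_def by (simp add: divide_le_eq)
qed


lemma sum_pow_le: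
  fixes lam :: real
  assumes "finite C" "lam \<ge> 1"
  shows "(\<Sum>c\<in>C. lam ^ f c - 1) \<le> lam ^ (\<Sum>c\<in>C. f c) - 1"
  using assms(1)
proof (induction C rule: finite_induct)
  case empty then show ?case by simp
next
  case (insert c C)
  have "0 \<le> (lam ^ f c - 1) * (lam ^ (\<Sum>c\<in>C. f c) - 1)"
    using assms(2) by (intro mult_nonneg_nonneg) (simp_all add: one_le_power)
  then show ?case using insert by (simp add: power_add algebra_simps)
qed

lemma Z_nonneg: "lam \<ge> 1 \<Longrightarrow> 0 \<le> Z V E lam q"
  unfolding Z_def by (intro sum_nonneg) simp

lemma sum_mono_le_size:
  assumes "finite A" "\<forall>e\<in>#E2. (fst e = a \<or> snd e = a) \<and> fst e \<noteq> snd e"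
  shows "(\<Sum>c\<in>A. mono_edges E2 (\<tau>(a := c))) \<le> size E2"
  using assms(2)
proof (induction E2)
  case empty then show ?case by (simp add: mono_edges_def)
next
  case (add e E)
  define v where "v = (if fst e = a then \<tau> (snd e) else \<tau> (fst e))"
  have ind: "(if (\<tau>(a := c)) (fst e) = (\<tau>(a := c)) (snd e) then 1 else 0) = (if c = v then 1 else (0::nat))" for c
    using add.prems unfolding v_def by auto
  have "mono_edges (add_mset e E) (\<tau>(a := c)) = mono_edges E (\<tau>(a := c)) + (if c = v then 1 else 0)" for c
    using ind[of c] by (simp add: mono_edges_def split: if_splits)
  then have S1: "(\<Sum>c\<in>A. mono_edges (add_mset e E) (\<tau>(a := c))) = (\<Sum>c\<in>A. mono_edges E (\<tau>(a := c))) + (\<Sum>c\<in>A. if c = v then 1 else 0)"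
    by (simp add: sum.distrib)
  have S2: "(\<Sum>c\<in>A. if c = v then 1 else (0::nat)) \<le> 1"
    using assms(1) by (simp add: sum.delta)
  have pr: "\<forall>e\<in>#E. (fst e = a \<or> snd e = a) \<and> fst e \<noteq> snd e" using add.prems by simp
  have IH: "(\<Sum>c\<in>A. mono_edges E (\<tau>(a := c))) \<le> size E" by (rule add.IH[OF pr])
  have "size (add_mset e E) = size E + 1" by simp
  then show ?case using S1 S2 IH by linarith
qed

lemma inner_bound:
  fixes lam :: real
  assumes "lam \<ge> 1" "\<forall>e\<in>#E2. (fst e = a \<or> snd e = a) \<and> fst e \<noteq> snd e"
  shows "(\<Sum>c<q. lam ^ mono_edges E2 (\<tau>(a := c))) \<le> real q - 1 + lam ^ size E2"
proof -
  have "(\<Sum>c<q. lam ^ mono_edges E2 (\<tau>(a := c)) - 1) \<le> lam ^ (\<Sum>c<q. mono_edges E2 (\<tau>(a := c))) - 1"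
    by (rule sum_pow_le) (use assms in auto)
  also have "\<dots> \<le> lam ^ size E2 - 1"
    using assms sum_mono_le_size[of "{..<q}" E2 a \<tau>] by (simp add: power_increasing)
  finally show ?thesis by (simp add: sum_subtractf)
qed

lemma main_bound:
  fixes V :: "'a set" and lam :: real
  assumes "finite V" "q \<ge> 1" "lam \<ge> 1" "D > 0"
  shows "(\<forall>e\<in>#E. fst e \<in> V \<and> snd e \<in> V \<and> fst e \<noteq> snd e) \<longrightarrow> (\<forall>x\<in>V. mg_degree E x \<le> D) \<longrightarrow>
    Z V E lam q \<le> (1 + (lam ^ D - 1) / real q) powr (real (size E) / real D) * real q ^ card V"
  using assms(1)
proof (induction V arbitrary: E rule: finite_induct)
  case empty
  show ?case
  proof (intro impI)
    assume "\<forall>e\<in>#E. fst e \<in> {} \<and> snd e \<in> {} \<and> fst e \<noteq> snd e"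
    then have "E = {#}" by (cases E) auto
    moreover have "1 + (lam ^ D - 1) / real q > 0" using assms by (simp add: add_pos_nonneg)
    ultimately show "Z {} E lam q \<le> (1 + (lam ^ D - 1) / real q) powr (real (size E) / real D) * real q ^ card {}"
      by (simp add: Z_empty)
  qed
next
  case (insert a V)
  define B where "B = 1 + (lam ^ D - 1) / real q"
  have B1: "B \<ge> 1" unfolding B_def using assms by (simp add: one_le_power)
  show ?case
  proof (intro impI)
    assume e: "\<forall>e\<in>#E. fst e \<in> insert a V \<and> snd e \<in> insert a V \<and> fst e \<noteq> snd e"
      and d: "\<forall>x\<in>insert a V. mg_degree E x \<le> D"
    define P where "P = (\<lambda>e::'a\<times>'a. fst e = a \<or> snd e = a)"
    define E1 where "E1 = filter_mset (\<lambda>e. \<not> P e) E"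
    define E2 where "E2 = filter_mset P E"
    have EE: "E = E2 + E1" unfolding E1_def E2_def by (rule multiset_partition)
    have e1: "\<forall>e\<in>#E1. fst e \<in> V \<and> snd e \<in> V \<and> fst e \<noteq> snd e"
      using e unfolding E1_def P_def by auto
    have e1a: "\<forall>e\<in>#E1. fst e \<noteq> a \<and> snd e \<noteq> a" unfolding E1_def P_def by auto
    have e2: "\<forall>e\<in>#E2. (fst e = a \<or> snd e = a) \<and> fst e \<noteq> snd e"
      using e unfolding E2_def P_def by auto
    have d1: "\<forall>x\<in>V. mg_degree E1 x \<le> D"
    proof
      fix x assume "x \<in> V"
      have "mg_degree E1 x \<le> mg_degree E x" unfolding mg_degree_def E1_def
        by (intro size_mset_mono) (simp add: multiset_filter_mono multiset_filter_subset)
      then show "mg_degree E1 x \<le> D" using d \<open>x \<in> V\<close> by auto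
    qed
    have IH: "Z V E1 lam q \<le> B powr (real (size E1) / real D) * real q ^ card V"
      using insert.IH e1 d1 unfolding B_def by blast
    define dd where "dd = size E2"
    have dD: "dd \<le> D" using d unfolding dd_def E2_def P_def mg_degree_def by auto
    have "Z (insert a V) E lam q = (\<Sum>\<tau>\<in>V \<rightarrow>\<^sub>E {..<q}. lam ^ mono_edges E1 \<tau> * (\<Sum>c<q. lam ^ mono_edges E2 (\<tau>(a := c))))"
      using insert.hyps(2) e1a
      by (simp add: Z_ins EE mono_plus mono_untouched power_add sum_distrib_left mult.commute)
    also have "\<dots> \<le> (\<Sum>\<tau>\<in>V \<rightarrow>\<^sub>E {..<q}. lam ^ mono_edges E1 \<tau> * (real q - 1 + lam ^ dd))"
      unfolding dd_def using inner_bound[OF assms(3) e2] assms(3)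
      by (intro sum_mono mult_left_mono) auto
    also have "\<dots> = (real q - 1 + lam ^ dd) * Z V E1 lam q"
      by (simp add: Z_def sum_distrib_left mult_ac)
    also have "\<dots> \<le> (real q * B powr (real dd / real D)) * (B powr (real (size E1) / real D) * real q ^ card V)"
    proof (rule mult_mono[OF _ IH])
      have c: "1 - 1/real q + (1/real q) * (lam ^ D) powr (real dd / real D) \<le> (1 - 1/real q + (1/real q) * lam ^ D) powr (real dd / real D)"
        using assms dD by (intro concave_step) (auto simp: one_le_power)
      have pe: "(lam ^ D) powr (real dd / real D) = lam ^ dd"
        using assms by (simp add: powr_realpow[symmetric] powr_powr)
      have Beq: "1 - 1/real q + (1/real q) * lam ^ D = B"
        unfolding B_def by (simp add: diff_divide_distrib)
      have "1 - 1/real q + (1/real q) * lam ^ dd \<le> B powr (real dd / real D)"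
        using c unfolding Beq pe .
      then have "real q * (1 - 1/real q + (1/real q) * lam ^ dd) \<le> real q * B powr (real dd / real D)"
        by (intro mult_left_mono) auto
      moreover have "real q * (1 - 1/real q + (1/real q) * lam ^ dd) = real q - 1 + lam ^ dd"
        using assms by (simp add: field_simps)
      ultimately show "real q - 1 + lam ^ dd \<le> real q * B powr (real dd / real D)"
        by linarith
      show "0 \<le> real q * B powr (real dd / real D)" by simp
      show "0 \<le> Z V E1 lam q" using assms by (simp add: Z_nonneg)
    qed
    also have "\<dots> = B powr (real (size E) / real D) * real q ^ card (insert a V)"
      using insert.hyps B1 unfolding EE dd_def
      by (simp add: powr_add[symmetric] add_divide_distrib)
    finally show "Z (insert a V) E lam q \<le> (1 + (lam ^ D - 1) / real q) powr (real (size E) / real D) * real q ^ card (insert a V)"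
      unfolding B_def .
  qed
qed


lemma sum_if_one:
  fixes x :: real
  assumes "v < q"
  shows "(\<Sum>c<q. if c = v then x else 1) = real q - 1 + x"
proof -
  have "(\<Sum>c<q. if c = v then x else 1) = (\<Sum>c<q. (if c = v then x - 1 else 0) + 1)"
    by (intro sum.cong) auto
  also have "\<dots> = (x - 1) + real q" using assms by (simp add: sum.distrib)
  finally show ?thesis by simp
qed

lemma Z_pair:
  fixes lam :: real
  assumes "a \<notin> S" "b \<notin> S" "a \<noteq> b" "\<forall>e\<in>#E. fst e \<noteq> a \<and> snd e \<noteq> a \<and> fst e \<noteq> b \<and> snd e \<noteq> b"
  shows "Z (insert a (insert b S)) (E + replicate_mset D (a, b)) lam q = (real q - 1 + lam ^ D) * q * Z S E lam q"
proof -
  have pif: "lam ^ (if P then D else 0) = (if P then lam ^ D else 1)" for P by simp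
  have "Z (insert a (insert b S)) (E + replicate_mset D (a, b)) lam q
      = (\<Sum>\<tau>\<in>insert b S \<rightarrow>\<^sub>E {..<q}. \<Sum>c<q. lam ^ mono_edges E \<tau> * (if c = \<tau> b then lam ^ D else 1))"
    using assms by (simp add: Z_ins mono_plus mono_rep mono_untouched power_add pif)
  also have "\<dots> = (\<Sum>\<tau>\<in>insert b S \<rightarrow>\<^sub>E {..<q}. lam ^ mono_edges E \<tau> * (real q - 1 + lam ^ D))"
  proof (intro sum.cong refl)
    fix \<tau> assume "\<tau> \<in> insert b S \<rightarrow>\<^sub>E {..<q}"
    then have "\<tau> b < q" by auto
    then show "(\<Sum>c<q. lam ^ mono_edges E \<tau> * (if c = \<tau> b then lam ^ D else 1)) = lam ^ mono_edges E \<tau> * (real q - 1 + lam ^ D)"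
      by (simp add: sum_distrib_left[symmetric] sum_if_one)
  qed
  also have "\<dots> = (real q - 1 + lam ^ D) * Z (insert b S) E lam q"
    by (simp add: Z_def sum_distrib_left mult_ac)
  also have "\<dots> = (real q - 1 + lam ^ D) * q * Z S E lam q"
    using assms by (simp add: Z_isolated)
  finally show ?thesis .
qed

definition Hk :: "nat \<Rightarrow> nat \<Rightarrow> (nat \<times> nat) multiset" where
  "Hk D k = mset (concat (map (\<lambda>i. replicate D (2*i, 2*i+1)) [0..<k]))"

lemma Hk_Suc: "Hk D (Suc k) = Hk D k + replicate_mset D (2*k, 2*k+1)"
  by (simp add: Hk_def)

lemma Hk_in: "e \<in># Hk D k \<Longrightarrow> fst e < 2*k \<and> snd e < 2*k"
  by (auto simp: Hk_def split: if_splits)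

lemma Z_H:
  fixes lam :: real
  shows "\<forall>k. 2*k \<le> N \<longrightarrow> Z {..<N} (Hk D k) lam q = ((real q - 1 + lam ^ D) * q) ^ k * real q ^ (N - 2*k)"
proof (induction N rule: less_induct)
  case (less N)
  show ?case
  proof (intro allI impI)
    fix k assume k: "2*k \<le> N"
    show "Z {..<N} (Hk D k) lam q = ((real q - 1 + lam ^ D) * q) ^ k * real q ^ (N - 2*k)"
    proof (cases N)
      case 0
      then have "k = 0" using k by simp
      then show ?thesis using 0 by (simp add: Hk_def Z_empty)
    next
      case (Suc M)
      show ?thesis
      proof (cases "2*k \<le> M")
        case True
        have "Z {..<N} (Hk D k) lam q = q * Z {..<M} (Hk D k) lam q"
          unfolding Suc lessThan_Suc using Hk_in True
          by (intro Z_isolated) force+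
        also have "\<dots> = q * (((real q - 1 + lam ^ D) * q) ^ k * real q ^ (M - 2*k))"
          using less.IH[of M] Suc True by simp
        also have "\<dots> = ((real q - 1 + lam ^ D) * q) ^ k * real q ^ (N - 2*k)"
          using Suc True by (simp add: Suc_diff_le)
        finally show ?thesis .
      next
        case False
        define j where "j = k - 1"
        have j: "k = Suc j" "M = 2*j + 1" using k Suc False unfolding j_def by auto
        have NN: "{..<N} = insert (2*j) (insert (2*j+1) {..<2*j})"
          using Suc j by auto
        have "Z {..<N} (Hk D k) lam q = (real q - 1 + lam ^ D) * q * Z {..<2*j} (Hk D j) lam q"
          unfolding NN j Hk_Suc using Hk_in[of _ D j]
          by (intro Z_pair) force+
        also have "\<dots> = (real q - 1 + lam ^ D) * q * (((real q - 1 + lam ^ D) * q) ^ j * real q ^ (2*j - 2*j))"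
          using less.IH[of "2*j"] Suc j by simp
        also have "\<dots> = ((real q - 1 + lam ^ D) * q) ^ k * real q ^ (N - 2*k)"
          using Suc j by simp
        finally show ?thesis .
      qed
    qed
  qed
qed


theorem theorem3p1:
  fixes V :: "'a set" and E :: "('a \<times> 'a) multiset" and q :: nat and lam :: real
  assumes "loopless_multigraph V E" and "q \<ge> 1" and "lam \<ge> 1"
  shows "Z V E lam q \<le>
           (1 + (lam ^ max_degree V E - 1) / real q)
             ^ nat \<lceil>real (size E) / real (max_degree V E)\<rceil> * real q ^ card V
         \<and> (\<forall>n m \<Delta>::nat. 0 < n \<longrightarrow> 0 < m \<longrightarrow> 0 < \<Delta> \<longrightarrow> \<Delta> dvd m \<longrightarrow> 2 * m div \<Delta> \<le> n \<longrightarrow>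
           Z (H_vertices n) (H_edges m \<Delta>) lam q =
           (1 + (lam ^ \<Delta> - 1) / real q) ^ nat \<lceil>real m / real \<Delta>\<rceil> * real q ^ n)"
proof
  have fin: "finite V" and ed: "\<forall>e\<in>#E. fst e \<in> V \<and> snd e \<in> V \<and> fst e \<noteq> snd e"
    using assms(1) unfolding loopless_multigraph_def by auto
  define D where "D = max_degree V E"
  have degle: "\<forall>x\<in>V. mg_degree E x \<le> D"
    unfolding D_def max_degree_def using fin by (auto intro: Max_ge)
  show "Z V E lam q \<le> (1 + (lam ^ max_degree V E - 1) / real q)
             ^ nat \<lceil>real (size E) / real (max_degree V E)\<rceil> * real q ^ card V"
  proof (cases "D = 0")
    case True
    have "E = {#}"
    proof (rule ccontr)
      assume "E \<noteq> {#}"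
      then obtain e where e: "e \<in># E" by auto
      then have "fst e \<in> V" using ed by auto
      moreover have "mg_degree E (fst e) \<ge> 1"
      proof -
        have "e \<in># filter_mset (\<lambda>e'. fst e' = fst e \<or> snd e' = fst e) E" using e by simp
        then have "filter_mset (\<lambda>e'. fst e' = fst e \<or> snd e' = fst e) E \<noteq> {#}" by (metis empty_iff set_mset_empty)
        then show ?thesis unfolding mg_degree_def
          by (metis One_nat_def Suc_leI nonempty_has_size)
      qed
      ultimately show False using degle True by fastforce
    qed
    then have "Z V E lam q = real q ^ card V"
      using fin by (simp add: Z_def mono_edges_def card_PiE)
    then show ?thesis using True \<open>E = {#}\<close> unfolding D_def by simp
  next
    case False
    define B where "B = 1 + (lam ^ D - 1) / real q"
    have B1: "B \<ge> 1" unfolding B_def using assms by (simp add: one_le_power)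
    have "Z V E lam q \<le> B powr (real (size E) / real D) * real q ^ card V"
      using main_bound[OF fin assms(2,3), of D E] ed degle False unfolding B_def by auto
    also have "\<dots> \<le> B powr (real (nat \<lceil>real (size E) / real D\<rceil>)) * real q ^ card V"
      using B1 by (intro mult_right_mono powr_mono) (auto intro: le_of_int_ceiling)
    also have "\<dots> = B ^ nat \<lceil>real (size E) / real D\<rceil> * real q ^ card V"
      using B1 powr_realpow[of B "nat \<lceil>real (size E) / real D\<rceil>"] by (simp only:)
    finally show ?thesis unfolding B_def D_def .
  qed
next
  show "\<forall>n m \<Delta>::nat. 0 < n \<longrightarrow> 0 < m \<longrightarrow> 0 < \<Delta> \<longrightarrow> \<Delta> dvd m \<longrightarrow> 2 * m div \<Delta> \<le> n \<longrightarrow>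
           Z (H_vertices n) (H_edges m \<Delta>) lam q =
           (1 + (lam ^ \<Delta> - 1) / real q) ^ nat \<lceil>real m / real \<Delta>\<rceil> * real q ^ n"
  proof (intro allI impI)
    fix n m \<Delta> :: nat
    assume "0 < n" "0 < m" "0 < \<Delta>" "\<Delta> dvd m" "2 * m div \<Delta> \<le> n"
    define k where "k = m div \<Delta>"
    have mk: "m = k * \<Delta>" using \<open>\<Delta> dvd m\<close> unfolding k_def by simp
    have k2: "2 * k \<le> n" using \<open>2 * m div \<Delta> \<le> n\<close> \<open>0 < \<Delta>\<close> unfolding mk by simp
    have ck: "nat \<lceil>real m / real \<Delta>\<rceil> = k" using \<open>0 < \<Delta>\<close> unfolding mk by simp
    have "Z (H_vertices n) (H_edges m \<Delta>) lam q = ((real q - 1 + lam ^ \<Delta>) * q) ^ k * real q ^ (n - 2*k)"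
      using Z_H[of n \<Delta> lam q] k2 unfolding H_vertices_def H_edges_def Hk_def k_def by simp
    also have "\<dots> = ((1 + (lam ^ \<Delta> - 1) / real q) * real q ^ 2) ^ k * real q ^ (n - 2*k)"
    proof -
      have "(real q - 1 + lam ^ \<Delta>) * q = (1 + (lam ^ \<Delta> - 1) / real q) * real q ^ 2"
        using assms(2) by (simp add: field_simps power2_eq_square)
      then show ?thesis by (simp only:)
    qed
    also have "\<dots> = (1 + (lam ^ \<Delta> - 1) / real q) ^ k * (real q ^ (2*k) * real q ^ (n - 2*k))"
      by (simp add: power_mult_distrib power_mult)
    also have "\<dots> = (1 + (lam ^ \<Delta> - 1) / real q) ^ k * real q ^ n"
      using k2 by (simp add: power_add[symmetric])
    finally show "Z (H_vertices n) (H_edges m \<Delta>) lam q = (1 + (lam ^ \<Delta> - 1) / real q) ^ nat \<lceil>real m / real \<Delta>\<rceil> * real q ^ n"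
      unfolding ck .
  qed
qed

end
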